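(* Let $n,m\in\mathbb{N}$ and $f,g:\mathbb{F}_2^n\to\mathbb{F}_2$. Run algorithm $\mathbb{A}^{(m)}(\mathrm{H}^{\otimes n})$ and measure all $2n$ qubits. Then for every $\mathbf{y}\in\mathbb{F}_2^n$ the probability of observing $\ket{\mathbf{y}}\ket{0^n}$ is $2^{-3n}|C^{(m)}_{f,g}(\mathbf{y})|^2$.
   Context: $\zeta_m=e^{2\pi i/m}$, $\overline{\zeta_m}$ its conjugate; $wt$ is Hamming weight; $\mathbf{x}\cdot\mathbf{y}=\bigoplus_i x_iy_i$; $\mathbf{x}\odot\mathbf{y}=\sum_ix_iy_i$ in the integers. $m$-crosscorrelation: $C^{(m)}_{f,g}(\mathbf{y})=\sum_{\mathbf{x}}(-1)^{f(\mathbf{x})\oplus g(\mathbf{x}\oplus\mathbf{y})}(\zeta_m^2)^{\mathbf{x}\odot\mathbf{y}}$. Gates: $\mathrm{H}$ Hadamard; $\Omega_m=\frac{1}{\sqrt2}\begin{pmatrix}1&\zeta_m\\1&-\zeta_m\end{pmatrix}$; $\overline{\Omega}_m=\frac{1}{\sqrt2}\begin{pmatrix}1&\overline{\zeta_m}\\1&-\overline{\zeta_m}\end{pmatrix}$; $U_f$ is the phase oracle $\ket{\mathbf{x}}\mapsto(-1)^{f(\mathbf{x})}\ket{\mathbf{x}}$. Algorithm $\mathbb{A}^{(m)}(\mathrm{C}_n)$, for an $n$-qubit unitary $\mathrm{C}_n$: two $n$-qubit registers start in $\ket{0^n}\ket{0^n}$; apply $\mathrm{C}_n$ to the first register; then on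 the second register run the three-query $m$-Forrelation circuit with the middle oracle replaced by the inner-product phase oracle controlled by the first register, i.e. apply to the second register in order $\mathrm{H}^{\otimes n}$, $U_f$, $\Omega_m^{\otimes n}$, then the two-register gate $\ket{\mathbf{y}}\ket{\mathbf{x}}\mapsto(-1)^{\mathbf{x}\cdot\mathbf{y}}\ket{\mathbf{y}}\ket{\mathbf{x}}$, then $\mathrm{H}^{\otimes n}$, $U_g$, $\overline{\Omega}_m^{\otimes n}$ on the second register; finally measure both registers. *)

theory Defs
  imports "HOL-Analysis.Analysis"
begin

text \<open>Bit strings in F_2^n are boolean lists of length n (True = 1).
  An n-qubit state is an amplitude function on bit strings; a two-register
  state is an amplitude function on pairs (first register, second register).
  A single-qubit gate is given by its matrix entries U r c (row r, column c).\<close>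

type_synonym bits = "bool list"

definition bitvecs :: "nat \<Rightarrow> bits set" where
  "bitvecs n = {xs. length xs = n}"

definition b2n :: "bool \<Rightarrow> nat" where
  "b2n b = (if b then 1 else 0)"

definition xorv :: "bits \<Rightarrow> bits \<Rightarrow> bits" where
  "xorv x y = map2 (\<noteq>) x y"

definition idot :: "bits \<Rightarrow> bits \<Rightarrow> nat" where
  "idot x y = (\<Sum>i<min (length x) (length y). b2n (x ! i) * b2n (y ! i))"

definition fdot :: "bits \<Rightarrow> bits \<Rightarrow> bool" where
  "fdot x y = odd (idot x y)"

definition sgn1 :: "bool \<Rightarrow> complex" where
  "sgn1 b = (if b then -1 else 1)"

definition zeta :: "nat \<Rightarrow> complex" where
  "zeta m = cis (2 * pi / real m)"

definition crosscorr :: "nat \<Rightarrow> nat \<Rightarrow> (bits \<Rightarrow> bool) \<Rightarrow> (bits \<Rightarrow> bool) \<Rightarrow> bits \<Rightarrow> complex" where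
  "crosscorr m n f g y =
     (\<Sum>x\<in>bitvecs n. sgn1 (f x \<noteq> g (xorv x y)) * (zeta m ^ 2) ^ idot x y)"

definition hadamard :: "bool \<Rightarrow> bool \<Rightarrow> complex" where
  "hadamard r c = sgn1 (r \<and> c) / sqrt 2"

definition omega :: "nat \<Rightarrow> bool \<Rightarrow> bool \<Rightarrow> complex" where
  "omega m r c = zeta m ^ b2n c * sgn1 (r \<and> c) / sqrt 2"

definition omega_bar :: "nat \<Rightarrow> bool \<Rightarrow> bool \<Rightarrow> complex" where
  "omega_bar m r c = cnj (zeta m) ^ b2n c * sgn1 (r \<and> c) / sqrt 2"

definition tensor_pow :: "nat \<Rightarrow> (bool \<Rightarrow> bool \<Rightarrow> complex) \<Rightarrow> bits \<Rightarrow> bits \<Rightarrow> complex" where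
  "tensor_pow n U y x = (\<Prod>i<n. U (y ! i) (x ! i))"

definition apply_first :: "nat \<Rightarrow> (bits \<Rightarrow> bits \<Rightarrow> complex) \<Rightarrow> (bits \<times> bits \<Rightarrow> complex) \<Rightarrow> bits \<times> bits \<Rightarrow> complex" where
  "apply_first n M \<Phi> = (\<lambda>(y, x). \<Sum>y'\<in>bitvecs n. M y y' * \<Phi> (y', x))"

definition apply_second :: "nat \<Rightarrow> (bits \<Rightarrow> bits \<Rightarrow> complex) \<Rightarrow> (bits \<times> bits \<Rightarrow> complex) \<Rightarrow> bits \<times> bits \<Rightarrow> complex" where
  "apply_second n M \<Phi> = (\<lambda>(y, x). \<Sum>x'\<in>bitvecs n. M x x' * \<Phi> (y, x'))"

definition oracle_second :: "(bits \<Rightarrow> bool) \<Rightarrow> (bits \<times> bits \<Rightarrow> complex) \<Rightarrow> bits \<times> bits \<Rightarrow> complex" where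
  "oracle_second f \<Phi> = (\<lambda>(y, x). sgn1 (f x) * \<Phi> (y, x))"

definition ip_gate :: "(bits \<times> bits \<Rightarrow> complex) \<Rightarrow> bits \<times> bits \<Rightarrow> complex" where
  "ip_gate \<Phi> = (\<lambda>(y, x). sgn1 (fdot x y) * \<Phi> (y, x))"

definition init_state :: "nat \<Rightarrow> bits \<times> bits \<Rightarrow> complex" where
  "init_state n = (\<lambda>(y, x). if y = replicate n False \<and> x = replicate n False then 1 else 0)"

definition alg_A :: "nat \<Rightarrow> nat \<Rightarrow> (bits \<Rightarrow> bits \<Rightarrow> complex) \<Rightarrow> (bits \<Rightarrow> bool) \<Rightarrow> (bits \<Rightarrow> bool)
                     \<Rightarrow> bits \<times> bits \<Rightarrow> complex" where
  "alg_A m n C f g =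
     (apply_second n (tensor_pow n (omega_bar m)) \<circ>
      oracle_second g \<circ>
      apply_second n (tensor_pow n hadamard) \<circ>
      ip_gate \<circ>
      apply_second n (tensor_pow n (omega m)) \<circ>
      oracle_second f \<circ>
      apply_second n (tensor_pow n hadamard) \<circ>
      apply_first n C) (init_state n)"

definition prob_obs :: "(bits \<times> bits \<Rightarrow> complex) \<Rightarrow> bits \<Rightarrow> bits \<Rightarrow> real" where
  "prob_obs \<Phi> y x = (cmod (\<Phi> (y, x)))\<^sup>2"

end

theory Submission
  imports Defs
begin

lemma bitvecs_Suc: "bitvecs (Suc n) = (\<lambda>(b,xs). b # xs) ` (UNIV \<times> bitvecs n)"
  unfolding bitvecs_def
proof (rule set_eqI)
  fix x :: bits show "x \<in> {xs. length xs = Suc n} \<longleftrightarrow> x \<in> (\<lambda>(b,xs). b # xs) ` (UNIV \<times> {xs. length xs = n})"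
    by (cases x) auto
qed

lemma finite_bitvecs: "finite (bitvecs n)"
proof (induction n)
  case 0 then show ?case by (simp add: bitvecs_def)
next
  case (Suc n) then show ?case by (simp add: bitvecs_Suc)
qed

lemma sum_prod_bitvecs:
  "(\<Sum>x\<in>bitvecs n. \<Prod>i<n. h i (x ! i)) = (\<Prod>i<n. h i False + h i True :: complex)"
proof (induction n arbitrary: h)
  case 0 then show ?case by (simp add: bitvecs_def)
next
  case (Suc n)
  have inj: "inj_on (\<lambda>(b,xs). b # xs) (UNIV \<times> bitvecs n)" by (auto simp: inj_on_def)
  have "(\<Sum>x\<in>bitvecs (Suc n). \<Prod>i<Suc n. h i (x ! i))
      = (\<Sum>p\<in>UNIV \<times> bitvecs n. h 0 (fst p) * (\<Prod>i<n. h (Suc i) (snd p ! i)))"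
    unfolding bitvecs_Suc by (subst sum.reindex[OF inj]) (simp del: prod.lessThan_Suc add: prod.lessThan_Suc_shift case_prod_beta)
  also have "\<dots> = (\<Sum>b\<in>UNIV. \<Sum>xs\<in>bitvecs n. h 0 b * (\<Prod>i<n. h (Suc i) (xs ! i)))"
    by (subst sum.cartesian_product) (simp add: case_prod_beta)
  also have "\<dots> = (\<Sum>b\<in>UNIV. h 0 b * (\<Prod>i<n. h (Suc i) False + h (Suc i) True))"
    by (simp add: sum_distrib_left[symmetric] Suc.IH[of "\<lambda>i. h (Suc i)"])
  also have "\<dots> = (\<Prod>i<Suc n. h i False + h i True)"
    by (simp del: prod.lessThan_Suc add: prod.lessThan_Suc_shift UNIV_bool algebra_simps)
  finally show ?case .
qed

lemma sgn1_odd: "sgn1 (odd k) = (-1) ^ k"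
  by (simp add: sgn1_def)

lemma sgn1_b2n: "sgn1 b = (-1) ^ b2n b"
  by (simp add: sgn1_def b2n_def)

lemma sgn1_fdot: "length x = n \<Longrightarrow> length y = n \<Longrightarrow> sgn1 (fdot x y) = (\<Prod>i<n. sgn1 (x ! i \<and> y ! i))"
  unfolding fdot_def idot_def sgn1_odd power_sum
  by (intro prod.cong) (auto simp: sgn1_def b2n_def)

lemma sgn1_mult: "sgn1 a * sgn1 b = sgn1 (a \<noteq> b)"
  by (simp add: sgn1_def)

definition "sq2 = 1 / complex_of_real (sqrt 2)"

lemma sq2_sq: "sq2 * sq2 = 1/2"
  unfolding sq2_def by (simp flip: of_real_mult)

lemma had_eq: "hadamard r c = sgn1 (r \<and> c) * sq2"
  by (simp add: hadamard_def sq2_def)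
lemma om_eq: "omega m r c = zeta m ^ b2n c * sgn1 (r \<and> c) * sq2"
  by (simp add: omega_def sq2_def)
lemma omb_eq: "omega_bar m r c = cnj (zeta m) ^ b2n c * sgn1 (r \<and> c) * sq2"
  by (simp add: omega_bar_def sq2_def)

lemma xorv_iff: "length z = n \<Longrightarrow> length a = n \<Longrightarrow> length b = n \<Longrightarrow>
   (z = xorv a b) \<longleftrightarrow> (\<forall>i<n. z ! i = (a ! i \<noteq> b ! i))"
  by (auto simp: xorv_def list_eq_iff_nth_eq)

lemma xorv_bitvecs: "a \<in> bitvecs n \<Longrightarrow> b \<in> bitvecs n \<Longrightarrow> xorv a b \<in> bitvecs n"
  by (simp add: xorv_def bitvecs_def)

lemma prod_if0: "(\<Prod>(i::nat)<n. if P i then a i else (0::complex)) = (if \<forall>i<n. P i then \<Prod>i<n. a i else 0)"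
  by (induction n) (auto simp: less_Suc_eq)

lemma coord: "(sgn1 (a \<and> False) * sq2 * (sgn1 (False \<and> c) * (zeta m ^ b2n b * sgn1 (False \<and> b) * sq2))) +
   (sgn1 (a \<and> True) * sq2 * (sgn1 (True \<and> c) * (zeta m ^ b2n b * sgn1 (True \<and> b) * sq2)))
   = (if a = (b \<noteq> c) then zeta m ^ b2n b else 0)"
proof -
  have e: "sq2 * sq2 = 1/2" by (rule sq2_sq)
  show ?thesis
    by (cases a; cases b; cases c) (simp_all add: sgn1_def b2n_def algebra_simps e, simp_all add: mult.assoc[symmetric] e)
qed

lemma inner:
  assumes "z \<in> bitvecs n" "y \<in> bitvecs n" "x' \<in> bitvecs n"
  shows "(\<Sum>x\<in>bitvecs n. tensor_pow n hadamard z x * (sgn1 (fdot x y) * tensor_pow n (omega m) x x'))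
     = (if z = xorv x' y then \<Prod>i<n. zeta m ^ b2n (x' ! i) else 0)"
proof -
  have "(\<Sum>x\<in>bitvecs n. tensor_pow n hadamard z x * (sgn1 (fdot x y) * tensor_pow n (omega m) x x'))
      = (\<Sum>x\<in>bitvecs n. \<Prod>i<n. hadamard (z!i) (x!i) * (sgn1 (x!i \<and> y!i) * omega m (x!i) (x'!i)))"
    using assms by (intro sum.cong refl) (simp add: bitvecs_def sgn1_fdot tensor_pow_def prod.distrib)
  also have "\<dots> = (\<Prod>i<n. if z!i = (x'!i \<noteq> y!i) then zeta m ^ b2n (x' ! i) else 0)"
    unfolding had_eq om_eq
    by (subst sum_prod_bitvecs[where h="\<lambda>i b. sgn1 (z!i \<and> b) * sq2 * (sgn1 (b \<and> y!i) * (zeta m ^ b2n (x'!i) * sgn1 (b \<and> x'!i) * sq2))"]) (simp only: coord)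
  also have "\<dots> = (if z = xorv x' y then \<Prod>i<n. zeta m ^ b2n (x' ! i) else 0)"
    unfolding prod_if0 using assms by (simp add: xorv_iff bitvecs_def)
  finally show ?thesis .
qed

lemma zeta_unit: "cnj (zeta m) * zeta m = 1"
  by (simp add: zeta_def cis_cnj cis_mult)

lemma coord2: "cnj (zeta m) ^ b2n (a \<noteq> b) * zeta m ^ b2n a = cnj (zeta m) ^ b2n b * (zeta m ^ 2) ^ (b2n a * b2n b)"
  using zeta_unit[of m]
  by (cases a; cases b) (simp_all add: b2n_def power2_eq_square mult.assoc[symmetric])

lemma Hzero: "tensor_pow n hadamard y (replicate n False) = sq2 ^ n"
  by (simp add: tensor_pow_def had_eq sgn1_def)

lemma S1: "apply_first n (tensor_pow n hadamard) (init_state n) = (\<lambda>(y,x). if x = replicate n False then sq2^n else 0)"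
proof -
  have Z: "replicate n False \<in> bitvecs n" by (simp add: bitvecs_def)
  show ?thesis
    by (rule ext, clarsimp simp: apply_first_def init_state_def Z Hzero finite_bitvecs if_distrib[of "\<lambda>t. _ * t"] cong: if_cong)
qed

lemma S2: "apply_second n (tensor_pow n hadamard) (\<lambda>(y,x). if x = replicate n False then sq2^n else 0) = (\<lambda>(y,x). sq2^(2*n))"
proof -
  have Z: "replicate n False \<in> bitvecs n" by (simp add: bitvecs_def)
  show ?thesis
    by (rule ext, clarsimp simp: apply_second_def Z Hzero finite_bitvecs if_distrib[of "\<lambda>t. _ * t"] power_add mult_2 cong: if_cong)
qed

lemma omb_row0: "tensor_pow n (omega_bar m) (replicate n False) w = sq2 ^ n * (\<Prod>i<n. cnj (zeta m) ^ b2n (w ! i))"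
  by (simp add: tensor_pow_def omb_eq sgn1_def prod.distrib mult.commute)

lemma phase_term:
  assumes "x \<in> bitvecs n" "y \<in> bitvecs n"
  shows "(\<Prod>i<n. cnj (zeta m) ^ b2n (xorv x y ! i)) * (\<Prod>i<n. zeta m ^ b2n (x ! i))
       = (\<Prod>i<n. cnj (zeta m) ^ b2n (y ! i)) * (zeta m ^ 2) ^ idot x y"
proof -
  have L: "length x = n" "length y = n" using assms by (auto simp: bitvecs_def)
  have "(\<Prod>i<n. cnj (zeta m) ^ b2n (xorv x y ! i)) * (\<Prod>i<n. zeta m ^ b2n (x ! i))
      = (\<Prod>i<n. cnj (zeta m) ^ b2n (x ! i \<noteq> y ! i) * zeta m ^ b2n (x ! i))"
    using L by (simp add: prod.distrib xorv_def)
  also have "\<dots> = (\<Prod>i<n. cnj (zeta m) ^ b2n (y ! i) * (zeta m ^ 2) ^ (b2n (x ! i) * b2n (y ! i)))"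
    by (simp only: coord2)
  also have "\<dots> = (\<Prod>i<n. cnj (zeta m) ^ b2n (y ! i)) * (zeta m ^ 2) ^ idot x y"
    using L by (simp add: prod.distrib idot_def power_sum)
  finally show ?thesis .
qed

lemma norm_zeta: "cmod (zeta m) = 1"
  by (simp add: zeta_def)

theorem theorem9:
  fixes n m :: nat and f g :: "bits \<Rightarrow> bool" and y :: bits
  assumes "0 < m"
    and "y \<in> bitvecs n"
  shows "prob_obs (alg_A m n (tensor_pow n hadamard) f g) y (replicate n False)
           = (cmod (crosscorr m n f g y))\<^sup>2 / 2 ^ (3 * n)"
proof -
  define Z where "Z = replicate n False"
  define B where "B = bitvecs n"
  define H where "H = tensor_pow n hadamard"
  define Om where "Om = tensor_pow n (omega m)"
  define Omb where "Omb = tensor_pow n (omega_bar m)"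
  define P where "P x' = (\<Prod>i<n. zeta m ^ b2n (x' ! i))" for x'
  define Q where "Q = (\<Prod>i<n. cnj (zeta m) ^ b2n (y ! i))"
  have yB: "y \<in> B" using assms by (simp add: B_def)
  have finB: "finite B" by (simp add: B_def finite_bitvecs)
  have Phi: "alg_A m n H f g (y, Z) = (\<Sum>z\<in>B. Omb Z z * (sgn1 (g z) * (\<Sum>x\<in>B. H z x * (sgn1 (fdot x y) * (\<Sum>x'\<in>B. Om x x' * (sgn1 (f x') * sq2^(2*n)))))))"
    unfolding alg_A_def comp_def H_def S1 S2 Z_def B_def Om_def Omb_def
    by (simp add: apply_second_def oracle_second_def ip_gate_def)
  have inner2: "(\<Sum>x\<in>B. H z x * (sgn1 (fdot x y) * (\<Sum>x'\<in>B. Om x x' * c x')))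
      = (\<Sum>x'\<in>B. c x' * (if z = xorv x' y then P x' else 0))" if zB: "z \<in> B" for z c
  proof -
    have "(\<Sum>x\<in>B. H z x * (sgn1 (fdot x y) * (\<Sum>x'\<in>B. Om x x' * c x')))
        = (\<Sum>x\<in>B. \<Sum>x'\<in>B. c x' * (H z x * (sgn1 (fdot x y) * Om x x')))"
      by (simp add: sum_distrib_left mult_ac)
    also have "\<dots> = (\<Sum>x'\<in>B. c x' * (\<Sum>x\<in>B. H z x * (sgn1 (fdot x y) * Om x x')))"
      by (subst sum.swap) (simp add: sum_distrib_left)
    also have "\<dots> = (\<Sum>x'\<in>B. c x' * (if z = xorv x' y then P x' else 0))"
      using zB yB unfolding B_def H_def Om_def P_def
      by (intro sum.cong refl) (simp add: inner)
    finally show ?thesis .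
  qed
  have "alg_A m n H f g (y, Z) = (\<Sum>z\<in>B. \<Sum>x'\<in>B. Omb Z z * sgn1 (g z) * (sgn1 (f x') * sq2^(2*n)) * (if z = xorv x' y then P x' else 0))"
    unfolding Phi
  proof (intro sum.cong refl)
    fix z assume zB: "z \<in> B"
    show "Omb Z z * (sgn1 (g z) * (\<Sum>x\<in>B. H z x * (sgn1 (fdot x y) * (\<Sum>x'\<in>B. Om x x' * (sgn1 (f x') * sq2^(2*n))))))
      = (\<Sum>x'\<in>B. Omb Z z * sgn1 (g z) * (sgn1 (f x') * sq2^(2*n)) * (if z = xorv x' y then P x' else 0))"
      unfolding inner2[OF zB, of "\<lambda>x'. sgn1 (f x') * sq2^(2*n)"]
      by (simp add: sum_distrib_left mult_ac)
  qed
  also have "\<dots> = (\<Sum>x'\<in>B. Omb Z (xorv x' y) * sgn1 (g (xorv x' y)) * (sgn1 (f x') * sq2^(2*n)) * P x')"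
    apply (subst sum.swap)
    apply (intro sum.cong refl)
    using yB finB by (simp add: if_distrib[of "\<lambda>t. _ * t"] B_def xorv_bitvecs cong: if_cong)
  also have "\<dots> = (\<Sum>x'\<in>B. sq2^(3*n) * Q * (sgn1 (f x' \<noteq> g (xorv x' y)) * (zeta m ^ 2) ^ idot x' y))"
  proof (intro sum.cong refl)
    fix x' assume xB: "x' \<in> B"
    have "Omb Z (xorv x' y) * sgn1 (g (xorv x' y)) * (sgn1 (f x') * sq2^(2*n)) * P x'
       = sq2 ^ n * sq2^(2*n) * (sgn1 (f x') * sgn1 (g (xorv x' y))) * ((\<Prod>i<n. cnj (zeta m) ^ b2n (xorv x' y ! i)) * P x')"
      unfolding Omb_def Z_def omb_row0 by (simp add: mult_ac)
    also have "\<dots> = sq2^(3*n) * (sgn1 (f x' \<noteq> g (xorv x' y))) * (Q * (zeta m ^ 2) ^ idot x' y)"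
      using xB yB unfolding P_def Q_def B_def
      by (simp add: phase_term sgn1_mult flip: power_add)
    finally show "Omb Z (xorv x' y) * sgn1 (g (xorv x' y)) * (sgn1 (f x') * sq2^(2*n)) * P x'
       = sq2^(3*n) * Q * (sgn1 (f x' \<noteq> g (xorv x' y)) * (zeta m ^ 2) ^ idot x' y)"
      by (simp add: mult_ac)
  qed
  also have "\<dots> = sq2^(3*n) * Q * crosscorr m n f g y"
    by (simp add: crosscorr_def B_def sum_distrib_left)
  finally have A: "alg_A m n H f g (y, Z) = sq2^(3*n) * Q * crosscorr m n f g y" .
  have nQ: "cmod Q = 1"
    unfolding Q_def by (simp add: prod_norm[symmetric] norm_power norm_zeta)
  have ns: "cmod sq2 ^ 2 = 1/2"
    by (simp add: sq2_def norm_divide power_divide)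
  have "(cmod (sq2^(3*n) * Q * crosscorr m n f g y))\<^sup>2 = (cmod sq2 ^ 2) ^ (3*n) * (cmod (crosscorr m n f g y))\<^sup>2"
    by (simp add: norm_mult norm_power nQ power_mult_distrib flip: power_mult)
  also have "\<dots> = (cmod (crosscorr m n f g y))\<^sup>2 / 2 ^ (3 * n)"
    by (simp add: ns power_one_over)
  finally show ?thesis
    unfolding prob_obs_def A[unfolded H_def Z_def] .
qed

end
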